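(* For each $j\geq1$ there is a unique element $\Phi_j$ of the left ideal $Ay$ that is homogeneous of degree $j(N-1)$ and satisfies $\Phi_jx-x\Phi_j=x^Ny^{j-1}$. It is given by \[ \Phi_j=\frac1j\sum_{i=0}^{j-1}\binom{j}{i}c_i(N-1)\,x^{i(N-1)}y^{j-i}, \] and in particular $\Phi_1=y$ and, for $j\ge2$, $\Phi_j\equiv\frac1jy^j-\frac N2x^{N-1}y^{j-1}\pmod{F_{j-2}}$.
   Context: Let $\Bbbk$ be a field of characteristic zero and $N\geq1$ an integer. Let $A=A_N$ be the $\Bbbk$-algebra generated by $x,y$ subject to the relation $yx-xy=x^N$, graded with $x$ in degree $1$ and $y$ in degree $N-1$. For $k\ge-1$, $F_k$ is the span of the monomials $x^iy^j$ with $i\ge0$, $j\le k$. The polynomials $c_i(q)\in\mathbb Q[q]$ are defined recursively by $\sum_{i=0}^{j}\frac{(1)_{q,j+1-i}}{(j+1-i)!}\frac{c_i(q)}{i!}=\delta_{j,0}$ for all $j\ge0$, where $(a)_{k,i}=a(a+k)\cdots(a+(i-1)k)$; $c_i(N-1)$ denotes evaluation at $q=N-1$. *)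

theory Defs
  imports "HOL-Computational_Algebra.Polynomial"
begin

text \<open>Model of A_N = k<x,y>/(yx - xy - x^N).  Elements are written in the
PBW normal form sum p_l(x) y^l, represented as a 'k poly poly: the outer
variable is y, coefficients are polynomials in x.  Addition and scalar
multiplication are those of 'k poly poly; the (noncommutative) product is
the Ore-extension product for the derivation delta = x^N d/dx, i.e.
y^j p(x) = sum_k (j choose k) delta^k(p) y^(j-k), which is exactly the
normal-ordering rule forced by yx = xy + x^N.\<close>

definition delta :: "nat \<Rightarrow> 'k::field_char_0 poly \<Rightarrow> 'k poly" where
  "delta N p = monom 1 N * pderiv p"

definition amul :: "nat \<Rightarrow> 'k::field_char_0 poly poly \<Rightarrow> 'k poly poly \<Rightarrow> 'k poly poly" where
  "amul N P Q = (\<Sum>j\<le>degree P. \<Sum>k\<le>j. \<Sum>l\<le>degree Q.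
      monom (of_nat (j choose k) * coeff P j * (delta N ^^ k) (coeff Q l)) (j - k + l))"

definition mon :: "'k::field_char_0 \<Rightarrow> nat \<Rightarrow> nat \<Rightarrow> 'k poly poly" where
  "mon c i l = monom (monom c i) l"

abbreviation genX :: "'k::field_char_0 poly poly" where "genX \<equiv> mon 1 1 0"
abbreviation genY :: "'k::field_char_0 poly poly" where "genY \<equiv> mon 1 0 1"

definition in_left_ideal_Ay :: "nat \<Rightarrow> 'k::field_char_0 poly poly \<Rightarrow> bool" where
  "in_left_ideal_Ay N P \<longleftrightarrow> (\<exists>a. P = amul N a genY)"

definition homogeneous :: "nat \<Rightarrow> nat \<Rightarrow> 'k::field_char_0 poly poly \<Rightarrow> bool" where
  "homogeneous N d P \<longleftrightarrow> (\<forall>i l. coeff (coeff P l) i \<noteq> 0 \<longrightarrow> i + l * (N - 1) = d)"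

definition inF :: "nat \<Rightarrow> 'k::field_char_0 poly poly \<Rightarrow> bool" where
  "inF k P \<longleftrightarrow> (\<forall>l>k. coeff P l = 0)"

text \<open>(a)_{k,i} = a (a+k) ... (a+(i-1)k), here with a = 1 and k = q the variable.\<close>
definition gpoch1 :: "nat \<Rightarrow> rat poly" where
  "gpoch1 i = (\<Prod>m<i. [:1, of_nat m:])"

text \<open>c_j from the recursion: the i = j term equals c_j / j!, so
  c_0 = 1 and c_j = - j! * sum_{i<j} (1)_{q,j+1-i}/(j+1-i)! * c_i / i! for j > 0.\<close>
function cpoly :: "nat \<Rightarrow> rat poly" where
  "cpoly j = (if j = 0 then 1 else
     - smult (fact j) (\<Sum>i<j. smult (1 / (fact (j + 1 - i) * fact i)) (gpoch1 (j + 1 - i) * cpoly i)))"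
  by auto
termination by (relation "measure id") auto

definition cval :: "nat \<Rightarrow> nat \<Rightarrow> 'k::field_char_0" where
  "cval N i = of_rat (poly (cpoly i) (of_nat (N - 1)))"

definition Phi :: "nat \<Rightarrow> nat \<Rightarrow> 'k::field_char_0 poly poly" where
  "Phi N j = (\<Sum>i<j. mon ((1 / of_nat j) * of_nat (j choose i) * cval N i) (i * (N - 1)) (j - i))"

end

theory Submission
  imports Defs
begin

lemma sum_if_diff_eq:
  "(\<Sum>k\<le>(j::nat). if j - k = m then f k else 0) = (if m \<le> j then f (j - m) else (0::'a::comm_monoid_add))"
proof (cases "m \<le> j")
  case True
  have "(\<Sum>k\<le>j. if j - k = m then f k else 0) = (\<Sum>k\<le>j. if k = j - m then f k else 0)"
  proof (rule sum.cong[OF refl])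
    fix k assume "k \<in> {..j}"
    then have "k \<le> j" by simp
    then have "(j - k = m) = (k = j - m)" using True by arith
    then show "(if j - k = m then f k else 0) = (if k = j - m then f k else 0)" by simp
  qed
  also have "\<dots> = f (j - m)" by (simp add: sum.delta)
  finally show ?thesis using True by simp
next
  case False
  then show ?thesis by (intro trans[OF sum.neutral]) auto
qed

lemma delta_monom: "delta N (monom a e) = monom (of_nat e * a) (N + (e - 1))"
  by (simp add: delta_def pderiv_monom mult_monom)

definition gp :: "nat \<Rightarrow> nat \<Rightarrow> 'k::field_char_0" where
  "gp N k = of_rat (poly (gpoch1 k) (of_nat (N - 1)))"

lemma gpoch1_Suc: "gpoch1 (Suc k) = gpoch1 k * [:1, of_nat k:]"
  by (simp add: gpoch1_def)

lemma gp_Suc: "N \<ge> 1 \<Longrightarrow> gp N (Suc k) = (gp N k :: 'k::field_char_0) * of_nat (1 + k * (N - 1))"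
  by (simp add: gp_def gpoch1_Suc of_rat_mult of_rat_add of_rat_diff of_nat_diff algebra_simps)

lemma delta_pow_X: "N \<ge> 1 \<Longrightarrow>
  (delta N ^^ k) (monom 1 1) = monom (gp N k :: 'k::field_char_0) (1 + k * (N - 1))"
proof (induction k)
  case 0
  then show ?case by (simp add: gp_def gpoch1_def)
next
  case (Suc k)
  have e: "N + (1 + k * (N - 1) - 1) = 1 + Suc k * (N - 1)" using Suc.prems by (cases N) auto
  show ?case using Suc by (simp only: funpow.simps o_apply delta_monom e gp_Suc mult.commute)
qed

lemma coeff_mon: "coeff (mon c i l) l' = (if l = l' then monom c i else 0)"
  by (simp add: mon_def)

lemma degree_genX: "degree (genX :: 'k::field_char_0 poly poly) = 0"
  by (simp add: mon_def monom_0)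

lemma coeff_amul_genX:
  assumes "degree P \<le> M"
  shows "coeff (amul N P genX) m = (\<Sum>j\<le>M. if m \<le> j then of_nat (j choose (j - m)) * coeff P j * (delta N ^^ (j - m)) (monom 1 1) else 0)"
proof -
  have "coeff (amul N P genX) m = (\<Sum>j\<le>degree P. if m \<le> j then of_nat (j choose (j - m)) * coeff P j * (delta N ^^ (j - m)) (monom 1 1) else 0)"
    unfolding amul_def apply (simp add: degree_genX coeff_sum mon_def monom_0 sum_if_diff_eq)
    apply (intro sum.cong refl if_cong)
    apply (simp_all add: mon_def)
    done
  also have "\<dots> = (\<Sum>j\<le>M. if m \<le> j then of_nat (j choose (j - m)) * coeff P j * (delta N ^^ (j - m)) (monom 1 1) else 0)"
    by (rule sum.mono_neutral_left) (use assms in \<open>auto simp: coeff_eq_0\<close>)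
  finally show ?thesis .
qed

lemma coeff_amul_genX_left:
  "coeff (amul N genX P) m = monom 1 1 * coeff P m"
  unfolding amul_def by (simp add: degree_genX coeff_sum mon_def monom_0 coeff_eq_0)


lemma coeff_D:
  assumes "degree P \<le> M"
  shows "coeff (amul N P genX - amul N genX P) m =
    (\<Sum>j\<le>M. if m < j then of_nat (j choose (j - m)) * coeff P j * (delta N ^^ (j - m)) (monom 1 1) else 0)"
proof -
  let ?T = "\<lambda>j. of_nat (j choose (j - m)) * coeff P j * (delta N ^^ (j - m)) (monom 1 1)"
  have split: "\<And>j. (if m \<le> j then ?T j else 0) = (if j = m then ?T j else 0) + (if m < j then ?T j else 0)"
    by auto
  have "coeff (amul N P genX) m = (\<Sum>j\<le>M. if j = m then ?T j else 0) + (\<Sum>j\<le>M. if m < j then ?T j else 0)"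
    unfolding coeff_amul_genX[OF assms] split sum.distrib ..
  moreover have "(\<Sum>j\<le>M. if j = m then ?T j else 0) = monom 1 1 * coeff P m"
  proof (cases "m \<le> M")
    case True then show ?thesis by (simp add: sum.delta mult.commute)
  next
    case False then have "coeff P m = 0" using assms by (simp add: coeff_eq_0)
    then show ?thesis using False by simp
  qed
  ultimately show ?thesis using coeff_amul_genX_left[of N P m] by simp
qed

lemma delta_pow_0: "(delta N ^^ k) 0 = 0"
  by (induction k) (simp_all add: delta_def)

lemma delta_pow_1: "(delta N ^^ k) [:c:] = (if k = 0 then [:c:] else 0)"
  by (induction k) (simp_all add: delta_def delta_pow_0 pderiv_pCons)

lemma sum_k0: "(\<Sum>k\<le>(x::nat). if P k then c k * (if k = 0 then u else 0) else 0) = (if P 0 then c 0 * (u::'a::semiring_0) else 0)"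
proof -
  have "(\<Sum>k\<le>x. if P k then c k * (if k = 0 then u else 0) else 0) = (\<Sum>k\<le>x. if k = 0 then (if P 0 then c 0 * u else 0) else 0)"
    by (rule sum.cong) auto
  then show ?thesis by (simp add: sum.delta)
qed

lemma degree_genY: "degree (genY :: 'k::field_char_0 poly poly) = 1"
  by (simp add: mon_def degree_monom_eq)

lemma coeff_amul_genY: "coeff (amul N a genY) m = (if m = 0 then 0 else coeff a (m - 1))"
proof -
  have "coeff (amul N a genY) m = (\<Sum>j\<le>degree a. \<Sum>k\<le>j. if k = 0 then (if j + 1 = m then coeff a j else 0) else 0)"
    unfolding amul_def mon_def
    apply (simp add: monom_0 degree_monom_eq coeff_sum)
    apply (intro sum.cong refl)
    apply (auto simp: delta_pow_0 delta_pow_1 monom_0 sum.atMost_Suc sum_k0 cong: if_cong)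
    done
  also have "\<dots> = (\<Sum>j\<le>degree a. if j + 1 = m then coeff a j else 0)"
    by (simp add: sum.delta)
  also have "\<dots> = (if m = 0 then 0 else coeff a (m - 1))"
  proof (cases "m = 0")
    case False
    have "(\<Sum>j\<le>degree a. if j + 1 = m then coeff a j else 0) = (\<Sum>j\<le>degree a. if j = m - 1 then coeff a j else 0)"
      by (rule sum.cong) (use False in auto)
    also have "\<dots> = coeff a (m - 1)" by (simp add: sum.delta coeff_eq_0)
    finally show ?thesis using False by simp
  qed simp
  finally show ?thesis .
qed

lemma Ay_iff: "in_left_ideal_Ay N P \<longleftrightarrow> coeff P 0 = 0"
proof
  assume "in_left_ideal_Ay N P"
  then obtain a where "P = amul N a genY" by (auto simp: in_left_ideal_Ay_def)
  then show "coeff P 0 = 0" using coeff_amul_genY[of N a 0] by simp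
next
  assume h: "coeff P 0 = 0"
  obtain a p where P: "P = pCons a p" by (rule pCons_cases)
  with h have "a = 0" by simp
  have "P = amul N p genY"
    by (rule poly_eqI) (use coeff_amul_genY[of N p] in \<open>simp add: P \<open>a = 0\<close> coeff_pCons split: nat.split\<close>)
  then show "in_left_ideal_Ay N P" by (auto simp: in_left_ideal_Ay_def)
qed


lemma D_inj:
  fixes P Q :: "'k::field_char_0 poly poly"
  assumes N: "N \<ge> 1" and P0: "coeff P 0 = 0" and Q0: "coeff Q 0 = 0"
    and eq: "amul N P genX - amul N genX P = amul N Q genX - amul N genX Q"
  shows "P = Q"
proof (rule ccontr)
  assume ne: "P \<noteq> Q"
  define R where "R = P - Q"
  define M where "M = max (degree P) (degree Q)"
  define L where "L = degree R"
  have R0: "R \<noteq> 0" using ne by (simp add: R_def)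
  have RL: "coeff R L \<noteq> 0" using R0 by (simp add: L_def)
  have "L \<noteq> 0"
  proof
    assume "L = 0"
    then have "R = [:coeff R 0:]" unfolding L_def by (metis degree0_coeffs coeff_pCons_0)
    then show False using R0 P0 Q0 by (simp add: R_def)
  qed
  have LM: "L \<le> M" unfolding L_def M_def R_def by (rule degree_diff_le_max)
  let ?T = "\<lambda>(S::'k poly poly) j. if L - 1 < j then of_nat (j choose (j - (L - 1))) * coeff S j * (delta N ^^ (j - (L - 1))) (monom 1 1) else 0"
  have "(\<Sum>j\<le>M. ?T P j) = (\<Sum>j\<le>M. ?T Q j)"
    using arg_cong[OF eq, of "\<lambda>S. coeff S (L - 1)"]
    by (simp only: coeff_D[of P M] coeff_D[of Q M] M_def max.cobounded1 max.cobounded2)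
  moreover have "\<And>j. ?T R j = ?T P j - ?T Q j" by (simp add: R_def algebra_simps)
  ultimately have "(\<Sum>j\<le>M. ?T R j) = 0"
    by (simp only: sum_subtractf) simp
  moreover have "(\<Sum>j\<le>M. ?T R j) = (\<Sum>j\<le>M. if j = L then ?T R j else 0)"
  proof (rule sum.cong[OF refl])
    fix j assume "j \<in> {..M}"
    show "?T R j = (if j = L then ?T R j else 0)"
    proof (cases "j = L")
      case False
      show ?thesis
      proof (cases "j < L")
        case True then have "\<not> L - 1 < j" using False by auto
        then show ?thesis using \<open>j \<noteq> L\<close> by simp
      next
        case False': False
        then have "j > L" using False by simp
        then have "coeff R j = 0" by (simp add: L_def coeff_eq_0)
        then show ?thesis by simp
      qed
    qed simp
  qed
  moreover have "(\<Sum>j\<le>M. if j = L then ?T R j else 0) = ?T R L"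
    using LM by (simp add: sum.delta)
  moreover have "?T R L = of_nat L * coeff R L * monom 1 N"
  proof -
    have "L - (L - 1) = 1" "L - 1 < L" using \<open>L \<noteq> 0\<close> by auto
    then show ?thesis using N by (simp add: delta_monom)
  qed
  moreover have "of_nat L * coeff R L * (monom 1 N :: 'k poly) \<noteq> 0"
    using RL \<open>L \<noteq> 0\<close> by simp
  ultimately show False by simp
qed


declare cpoly.simps[simp del]

lemma cpoly_0: "cpoly 0 = 1"
  by (subst cpoly.simps) simp

lemma cpoly_rec: "J \<noteq> 0 \<Longrightarrow> poly (cpoly J) q =
   - fact J * (\<Sum>i<J. (1 / (fact (J + 1 - i) * fact i)) * (poly (gpoch1 (J + 1 - i)) q * poly (cpoly i) q))"
  by (subst cpoly.simps) (simp add: poly_sum)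

lemma gpoch1_1: "gpoch1 (Suc 0) = 1"
  by (simp add: gpoch1_def)

lemma key_rat:
  assumes "n \<ge> 1"
  shows "(\<Sum>i<n. of_nat (n choose i) * poly (cpoly i) q * poly (gpoch1 (n - i)) q) = (if n = 1 then 1 else (0::rat))"
proof (cases "n = 1")
  case True then show ?thesis by (simp add: cpoly_0 gpoch1_def)
next
  case False
  define J where "J = n - 1"
  have nJ: "n = Suc J" and J0: "J \<noteq> 0" using assms False by (auto simp: J_def)
  define S where "S = (\<Sum>i<J. (1 / (fact (J + 1 - i) * fact i)) * (poly (gpoch1 (J + 1 - i)) q * poly (cpoly i) q))"
  have cJ: "poly (cpoly J) q = - fact J * S" using cpoly_rec[OF J0] by (simp add: S_def)
  have A: "(\<Sum>i<J. of_nat (n choose i) * poly (cpoly i) q * poly (gpoch1 (n - i)) q) = fact n * S"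
    unfolding S_def sum_distrib_left
  proof (rule sum.cong[OF refl])
    fix i assume "i \<in> {..<J}"
    then have i: "i \<le> n" "n - i = J + 1 - i" using nJ by auto
    show "of_nat (n choose i) * poly (cpoly i) q * poly (gpoch1 (n - i)) q =
      fact n * (1 / (fact (J + 1 - i) * fact i) * (poly (gpoch1 (J + 1 - i)) q * poly (cpoly i) q))"
      using i by (simp add: binomial_fact mult_ac)
  qed
  have "(\<Sum>i<n. of_nat (n choose i) * poly (cpoly i) q * poly (gpoch1 (n - i)) q)
      = fact n * S + of_nat n * poly (cpoly J) q"
    using A by (simp add: nJ gpoch1_1)
  also have "\<dots> = 0" using cJ by (simp add: nJ)
  finally show ?thesis using False by simp
qed

lemma key:
  assumes "n \<ge> 1"
  shows "(\<Sum>i<n. of_nat (n choose i) * cval N i * gp N (n - i)) = (if n = 1 then 1 else (0::'k::field_char_0))"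
proof -
  have "(\<Sum>i<n. of_nat (n choose i) * cval N i * gp N (n - i)) =
     (of_rat (\<Sum>i<n. of_nat (n choose i) * poly (cpoly i) (of_nat (N - 1)) * poly (gpoch1 (n - i)) (of_nat (N - 1))) :: 'k)"
    by (simp add: of_rat_sum of_rat_mult cval_def gp_def)
  also have "\<dots> = (if n = 1 then 1 else 0)" using key_rat[OF assms] by simp
  finally show ?thesis .
qed


definition cc :: "nat \<Rightarrow> nat \<Rightarrow> nat \<Rightarrow> 'k::field_char_0" where
  "cc N j i = (1 / of_nat j) * of_nat (j choose i) * cval N i"

lemma coeff_Phi: "coeff (Phi N j :: 'k::field_char_0 poly poly) l =
   (if 0 < l \<and> l \<le> j then monom (cc N j (j - l)) ((j - l) * (N - 1)) else 0)"
proof -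
  have "coeff (Phi N j :: 'k poly poly) l = (\<Sum>i<j. if j - i = l then monom (cc N j i) (i * (N - 1)) else 0)"
    unfolding Phi_def cc_def coeff_sum coeff_mon ..
  also have "\<dots> = (\<Sum>i<j. if i = j - l \<and> 0 < l \<and> l \<le> j then monom (cc N j i) (i * (N - 1)) else 0)"
    by (rule sum.cong) auto
  also have "\<dots> = (if 0 < l \<and> l \<le> j then monom (cc N j (j - l)) ((j - l) * (N - 1)) else 0)"
    by (cases "0 < l \<and> l \<le> j") (auto simp: sum.delta)
  finally show ?thesis .
qed

lemma degree_Phi: "degree (Phi N j :: 'k::field_char_0 poly poly) \<le> j"
  by (rule degree_le) (simp add: coeff_Phi)

lemma reindex_sum:
  assumes "m < (j::nat)"
  shows "(\<Sum>l\<le>j. if m < l then g l else 0) = (\<Sum>i<j - m. g (j - i))"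
proof -
  have "(\<Sum>l\<le>j. if m < l then g l else 0) = sum g {l\<in>{..j}. m < l}"
    using sum.inter_filter[of "{..j}" g "\<lambda>l. m < l"] by simp
  also have "{l\<in>{..j}. m < l} = {m<..j}" by auto
  also have "sum g {m<..j} = (\<Sum>i<j - m. g (j - i))"
    by (rule sum.reindex_bij_witness[of _ "\<lambda>l. j - l" "\<lambda>i. j - i"]) (use assms in auto)
  finally show ?thesis .
qed

lemma scalar_Phi:
  assumes "m < j"
  shows "(\<Sum>l\<le>j. if m < l then of_nat (l choose (l - m)) * cc N j (j - l) * gp N (l - m) else 0)
     = (if m = j - 1 then 1 else (0::'k::field_char_0))"
proof -
  define n where "n = j - m"
  have n1: "n \<ge> 1" and nj: "n \<le> j" using assms by (auto simp: n_def)
  have "(\<Sum>l\<le>j. if m < l then of_nat (l choose (l - m)) * cc N j (j - l) * gp N (l - m) else (0::'k))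
      = (\<Sum>i<n. of_nat ((j - i) choose (j - i - m)) * cc N j (j - (j - i)) * gp N (j - i - m))"
    unfolding n_def by (rule reindex_sum[OF assms])
  also have "\<dots> = (\<Sum>i<n. (1 / of_nat j * of_nat (j choose n)) * (of_nat (n choose i) * cval N i * gp N (n - i)))"
  proof (rule sum.cong[OF refl], goal_cases)
    case (1 i)
    then have i: "i < n" by simp
    have e1: "j - (j - i) = i" "j - i - m = n - i" using i nj by (auto simp: n_def)
    have cm: "(j choose n) * (n choose i) = (j choose i) * ((j - i) choose (n - i))"
      by (rule choose_mult) (use i nj in auto)
    have cm': "(of_nat (j choose n) * of_nat (n choose i) :: 'k) = of_nat (j choose i) * of_nat ((j - i) choose (n - i))"
      using arg_cong[OF cm, of "of_nat :: nat \<Rightarrow> 'k"] by simp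
    have "(1 / of_nat j * of_nat (j choose n)) * (of_nat (n choose i) * cval N i * gp N (n - i))
       = (1 / of_nat j) * (of_nat (j choose n) * of_nat (n choose i)) * cval N i * (gp N (n - i) :: 'k)"
      by (simp only: mult_ac)
    also have "\<dots> = (1 / of_nat j) * (of_nat (j choose i) * of_nat ((j - i) choose (n - i))) * cval N i * gp N (n - i)"
      by (simp only: cm')
    also have "\<dots> = of_nat ((j - i) choose (n - i)) * ((1 / of_nat j) * of_nat (j choose i) * cval N i) * gp N (n - i)"
      by (simp only: mult_ac)
    finally show ?case
      unfolding e1 cc_def by (metis)
  qed
  also have "\<dots> = (1 / of_nat j * of_nat (j choose n)) * (if n = 1 then 1 else 0)"
    unfolding sum_distrib_left[symmetric] key[OF n1] ..
  also have "\<dots> = (if m = j - 1 then 1 else 0)"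
    using assms by (auto simp: n_def)
  finally show ?thesis .
qed


lemma of_nat_monom: "(of_nat k :: 'a::comm_ring_1 poly) * monom a e = monom (of_nat k * a) e"
  by (simp add: of_nat_poly monom_0[symmetric] mult_monom)

lemma D_Phi:
  assumes N: "N \<ge> 1" and j: "j \<ge> 1"
  shows "amul N (Phi N j) genX - amul N genX (Phi N j) = (mon 1 N (j - 1) :: 'k::field_char_0 poly poly)"
proof (rule poly_eqI)
  fix m
  let ?e = "1 + (j - m) * (N - 1)"
  have "coeff (amul N (Phi N j) genX - amul N genX (Phi N j) :: 'k poly poly) m =
     (\<Sum>l\<le>j. if m < l then of_nat (l choose (l - m)) * coeff (Phi N j) l * (delta N ^^ (l - m)) (monom 1 1) else 0)"
    by (rule coeff_D[OF degree_Phi])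
  also have "\<dots> = (\<Sum>l\<le>j. if m < l then monom (of_nat (l choose (l - m)) * cc N j (j - l) * gp N (l - m)) ?e else 0)"
  proof (rule sum.cong[OF refl], goal_cases)
    case (1 l)
    show ?case
    proof (cases "m < l")
      case True
      have l: "0 < l" "l \<le> j" using 1 True by auto
      have ex: "(j - l) * (N - 1) + (1 + (l - m) * (N - 1)) = ?e"
      proof -
        have "(j - l) * (N - 1) + (l - m) * (N - 1) = ((j - l) + (l - m)) * (N - 1)"
          by (simp add: add_mult_distrib)
        also have "(j - l) + (l - m) = j - m" using l True by simp
        finally show ?thesis by simp
      qed
      have dX: "(delta N ^^ (l - m)) (monom 1 1) = monom (gp N (l - m) :: 'k) (1 + (l - m) * (N - 1))"
        by (rule delta_pow_X[OF N])
      have cP: "coeff (Phi N j :: 'k poly poly) l = monom (cc N j (j - l)) ((j - l) * (N - 1))"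
        using l by (simp add: coeff_Phi)
      show ?thesis using True
        by (simp only: if_True dX cP of_nat_monom mult_monom ex mult.assoc)
    qed simp
  qed
  also have "\<dots> = coeff (mon 1 N (j - 1)) m"
  proof (cases "m < j")
    case True
    have "(\<Sum>l\<le>j. if m < l then monom (of_nat (l choose (l - m)) * cc N j (j - l) * gp N (l - m)) ?e else 0)
      = monom (\<Sum>l\<le>j. if m < l then of_nat (l choose (l - m)) * cc N j (j - l) * gp N (l - m) else (0::'k)) ?e"
      unfolding monom_sum by (rule sum.cong) auto
    also have "\<dots> = monom (if m = j - 1 then 1 else 0) ?e"
      by (simp only: scalar_Phi[OF True])
    also have "\<dots> = coeff (mon 1 N (j - 1)) m"
      using N j by (auto simp: coeff_mon)
    finally show ?thesis .
  next
    case False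
    then show ?thesis using j by (auto simp: coeff_mon intro!: sum.neutral)
  qed
  finally show "coeff (amul N (Phi N j) genX - amul N genX (Phi N j) :: 'k poly poly) m = coeff (mon 1 N (j - 1)) m" .
qed

lemma homogeneous_Phi: "homogeneous N (j * (N - 1)) (Phi N j :: 'k::field_char_0 poly poly)"
  unfolding homogeneous_def
proof (intro allI impI)
  fix i l assume h: "coeff (coeff (Phi N j :: 'k poly poly) l) i \<noteq> 0"
  then have l: "0 < l" "l \<le> j" and i: "i = (j - l) * (N - 1)"
    by (auto simp: coeff_Phi split: if_splits)
  have "(j - l) * (N - 1) + l * (N - 1) = ((j - l) + l) * (N - 1)" by (simp add: add_mult_distrib)
  then show "i + l * (N - 1) = j * (N - 1)" using l i by simp
qed

lemma cval_0: "cval N 0 = 1"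
  by (simp add: cval_def cpoly_0)

lemma cval_1: "N \<ge> 1 \<Longrightarrow> cval N 1 = - (of_nat N / 2 :: 'k::field_char_0)"
proof -
  assume N: "N \<ge> 1"
  have g2: "gpoch1 (Suc (Suc 0)) = [:1, 1:]" by (simp add: gpoch1_def)
  have "poly (cpoly 1) (of_nat (N - 1)) = - (of_nat N / (2::rat))"
    using N by (simp add: cpoly_rec g2 cpoly_0 of_nat_diff numeral_2_eq_2 field_simps)
  then show ?thesis by (simp add: cval_def of_rat_minus of_rat_divide)
qed

lemma Phi_1: "(Phi N 1 :: 'k::field_char_0 poly poly) = genY"
  by (simp add: Phi_def cval_0)


theorem lemma4p1:
  fixes N j :: nat
  assumes "N \<ge> 1" and "j \<ge> 1"
  shows "(\<exists>!P :: 'k::field_char_0 poly poly.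
            in_left_ideal_Ay N P \<and> homogeneous N (j * (N - 1)) P \<and>
            amul N P genX - amul N genX P = mon 1 N (j - 1))
       \<and> (in_left_ideal_Ay N (Phi N j :: 'k poly poly) \<and>
          homogeneous N (j * (N - 1)) (Phi N j :: 'k poly poly) \<and>
          amul N (Phi N j) genX - amul N genX (Phi N j) = (mon 1 N (j - 1) :: 'k poly poly))
       \<and> (Phi N 1 :: 'k poly poly) = genY
       \<and> (j \<ge> 2 \<longrightarrow>
            inF (j - 2) ((Phi N j :: 'k poly poly)
               - (mon (1 / of_nat j) 0 j - mon (of_nat N / 2) (N - 1) (j - 1))))"
proof -
  have D: "amul N (Phi N j) genX - amul N genX (Phi N j) = (mon 1 N (j - 1) :: 'k poly poly)"
    by (rule D_Phi[OF assms])
  have Ay: "in_left_ideal_Ay N (Phi N j :: 'k poly poly)"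
    by (simp add: Ay_iff coeff_Phi)
  have H: "homogeneous N (j * (N - 1)) (Phi N j :: 'k poly poly)"
    by (rule homogeneous_Phi)
  have U: "\<exists>!P :: 'k poly poly.
            in_left_ideal_Ay N P \<and> homogeneous N (j * (N - 1)) P \<and>
            amul N P genX - amul N genX P = mon 1 N (j - 1)"
  proof (rule ex1I[of _ "Phi N j"])
    show "in_left_ideal_Ay N (Phi N j :: 'k poly poly) \<and> homogeneous N (j * (N - 1)) (Phi N j :: 'k poly poly) \<and>
          amul N (Phi N j) genX - amul N genX (Phi N j) = (mon 1 N (j - 1) :: 'k poly poly)"
      using D Ay H by blast
  next
    fix P :: "'k poly poly"
    assume "in_left_ideal_Ay N P \<and> homogeneous N (j * (N - 1)) P \<and>
            amul N P genX - amul N genX P = mon 1 N (j - 1)"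
    then have P0: "coeff P 0 = 0" and DP: "amul N P genX - amul N genX P = mon 1 N (j - 1)"
      by (auto simp: Ay_iff)
    show "P = Phi N j"
      by (rule D_inj[OF assms(1) P0]) (use Ay D DP in \<open>auto simp: Ay_iff\<close>)
  qed
  have L: "j \<ge> 2 \<longrightarrow> inF (j - 2) ((Phi N j :: 'k poly poly)
               - (mon (1 / of_nat j) 0 j - mon (of_nat N / 2) (N - 1) (j - 1)))"
  proof
    assume j2: "j \<ge> 2"
    have c0: "cc N j 0 = (1 / of_nat j :: 'k)" by (simp add: cc_def cval_0)
    have c1: "cc N j 1 = (- (of_nat N / 2) :: 'k)" using j2 cval_1[OF assms(1)] by (simp add: cc_def)
    show "inF (j - 2) ((Phi N j :: 'k poly poly)
               - (mon (1 / of_nat j) 0 j - mon (of_nat N / 2) (N - 1) (j - 1)))"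
      unfolding inF_def
    proof (intro allI impI)
      fix l assume l: "j - 2 < l"
      consider "l = j - 1" | "l = j" | "l > j" using l j2 by linarith
      then show "coeff ((Phi N j :: 'k poly poly)
               - (mon (1 / of_nat j) 0 j - mon (of_nat N / 2) (N - 1) (j - 1))) l = 0"
      proof cases
        case 1
        then have "j - l = 1" "0 < l" "l \<le> j" "l \<noteq> j" using j2 by auto
        then show ?thesis using 1 c1 by (simp add: coeff_Phi coeff_mon minus_monom)
      next
        case 2
        then have "j - l = 0" "0 < l" "j - 1 \<noteq> l" using j2 by auto
        then show ?thesis using 2 c0 by (simp add: coeff_Phi coeff_mon)
      next
        case 3
        then show ?thesis by (simp add: coeff_Phi coeff_mon)
      qed
    qed
  qed
  show ?thesis using U D Ay H Phi_1 L by blast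
qed

end
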